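(* Let $g(t)$, $t\in[0,T)$, be the maximal Ricci flow solution on $S^1\times S^3$ of the form $g(t)=\phi^2dz^2+a^2\omega^1\otimes\omega^1+b^2\omega^2\otimes\omega^2+c^2\omega^3\otimes\omega^3$ starting from initial data with $0<a\le b\le c$, and let $\hat c(t)=\max_s c(s,t)$. Suppose that at time $t=0$ we have $1\le\max_s\left(\frac{c}{a}\right)\le\lambda$ for some constant $\lambda\ge1$. Then for all $(z,t)\in S^1\times[0,T)$, $$1\le\frac{c^2}{a^2}\le e^{(\lambda^2-1)}(\lambda^2-1)\left(1-\frac{4t}{\hat c(0)^2}\right)^2+1.$$
   Context: $S^3=SU(2)$ carries a global left-invariant frame $E_1,E_2,E_3$ with $[E_i,E_j]=-2\epsilon_{ijk}E_k$ and dual coframe $\omega^i$; $z\in S^1=[0,2\pi)$, $\phi,a,b,c$ positive smooth $2\pi$-periodic functions; $s$ is the arclength coordinate $ds=\phi\,dz$. The Ricci flow $\partial_tg=-2\mathrm{Ric}(g)$ preserves this form. *)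

theory Defs
  imports "HOL-Analysis.Analysis"
begin

text \<open>Functions of (z,t) are curried: f z t.  A function is smooth on
  R x [0,T) if all iterated partial derivatives D i j (z-order i, t-order j)
  exist (one-sided in t at t = 0) and are continuous.\<close>

definition smooth_zt :: "real \<Rightarrow> (real \<Rightarrow> real \<Rightarrow> real) \<Rightarrow> bool" where
  "smooth_zt T f \<longleftrightarrow>
     (\<exists>D :: nat \<Rightarrow> nat \<Rightarrow> real \<Rightarrow> real \<Rightarrow> real. D 0 0 = f \<and>
        (\<forall>i j. continuous_on (UNIV \<times> {0..<T}) (\<lambda>p. D i j (fst p) (snd p)) \<and>
           (\<forall>z. \<forall>t\<in>{0..<T}.
              ((\<lambda>y. D i j y t) has_real_derivative D (Suc i) j z t) (at z) \<and>
              ((\<lambda>\<tau>. D i j z \<tau>) has_real_derivative D i (Suc j) z t) (at t within {0..<T}))))"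

text \<open>Partial derivative in z, and arclength derivative d/ds = (1/phi) d/dz.\<close>
definition pz :: "(real \<Rightarrow> real \<Rightarrow> real) \<Rightarrow> real \<Rightarrow> real \<Rightarrow> real" where
  "pz f z t = deriv (\<lambda>y. f y t) z"

definition ps :: "(real \<Rightarrow> real \<Rightarrow> real) \<Rightarrow> (real \<Rightarrow> real \<Rightarrow> real) \<Rightarrow> real \<Rightarrow> real \<Rightarrow> real" where
  "ps \<phi> f z t = pz f z t / \<phi> z t"

definition pss :: "(real \<Rightarrow> real \<Rightarrow> real) \<Rightarrow> (real \<Rightarrow> real \<Rightarrow> real) \<Rightarrow> real \<Rightarrow> real \<Rightarrow> real" where
  "pss \<phi> f = ps \<phi> (ps \<phi> f)"

text \<open>Ricci flow for g = phi^2 dz^2 + a^2 w1^2 + b^2 w2^2 + c^2 w3^2 on S^1 x S^3,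
  with [E_i,E_j] = -2 eps_ijk E_k.  Equivalent to d/dt g = -2 Ric(g):
  phi_t = phi (a_ss/a + b_ss/b + c_ss/c),
  a_t = a_ss + a_s (b_s/b + c_s/c) - 2 (a^4 - (b^2-c^2)^2)/(a b^2 c^2), cyclically.\<close>
definition warped_RF :: "real \<Rightarrow> (real \<Rightarrow> real \<Rightarrow> real) \<Rightarrow> (real \<Rightarrow> real \<Rightarrow> real)
    \<Rightarrow> (real \<Rightarrow> real \<Rightarrow> real) \<Rightarrow> (real \<Rightarrow> real \<Rightarrow> real) \<Rightarrow> bool" where
  "warped_RF T \<phi> a b c \<longleftrightarrow>
     smooth_zt T \<phi> \<and> smooth_zt T a \<and> smooth_zt T b \<and> smooth_zt T c \<and>
     (\<forall>z t. \<phi> (z + 2*pi) t = \<phi> z t \<and> a (z + 2*pi) t = a z t \<and>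
            b (z + 2*pi) t = b z t \<and> c (z + 2*pi) t = c z t) \<and>
     (\<forall>z. \<forall>t\<in>{0..<T}. 0 < \<phi> z t \<and> 0 < a z t \<and> 0 < b z t \<and> 0 < c z t \<and>
        ((\<lambda>\<tau>. \<phi> z \<tau>) has_real_derivative
            \<phi> z t * (pss \<phi> a z t / a z t + pss \<phi> b z t / b z t + pss \<phi> c z t / c z t))
          (at t within {0..<T}) \<and>
        ((\<lambda>\<tau>. a z \<tau>) has_real_derivative
            pss \<phi> a z t + ps \<phi> a z t * (ps \<phi> b z t / b z t + ps \<phi> c z t / c z t)
            - 2 * (a z t ^ 4 - (b z t ^ 2 - c z t ^ 2) ^ 2) / (a z t * b z t ^ 2 * c z t ^ 2))
          (at t within {0..<T}) \<and>
        ((\<lambda>\<tau>. b z \<tau>) has_real_derivative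
            pss \<phi> b z t + ps \<phi> b z t * (ps \<phi> a z t / a z t + ps \<phi> c z t / c z t)
            - 2 * (b z t ^ 4 - (a z t ^ 2 - c z t ^ 2) ^ 2) / (a z t ^ 2 * b z t * c z t ^ 2))
          (at t within {0..<T}) \<and>
        ((\<lambda>\<tau>. c z \<tau>) has_real_derivative
            pss \<phi> c z t + ps \<phi> c z t * (ps \<phi> a z t / a z t + ps \<phi> b z t / b z t)
            - 2 * (c z t ^ 4 - (a z t ^ 2 - b z t ^ 2) ^ 2) / (a z t ^ 2 * b z t ^ 2 * c z t))
          (at t within {0..<T}))"

end

theory Submission
  imports Defs
begin


lemma per_int:
  assumes "\<And>z. f (z + p) = (f z :: real)"
  shows "f (z + of_int k * p) = f z"
proof (induction k arbitrary: z rule: int_induct[where k=0])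
  case base then show ?case by simp
next
  case (step1 i) 
  have "f (z + of_int (i+1) * p) = f ((z + of_int i * p) + p)" by (simp add: algebra_simps)
  also have "\<dots> = f z" using assms step1 by simp
  finally show ?case .
next
  case (step2 i)
  have "f (z + of_int (i - 1) * p) = f ((z - p) + of_int i * p)" by (simp add: algebra_simps)
  also have "\<dots> = f (z - p)" using step2 by simp
  also have "\<dots> = f z" using assms[of "z - p"] by simp
  finally show ?case .
qed

lemma per_reduce:
  assumes "\<And>z. f (z + 2*pi) = (f z :: real)"
  shows "\<exists>z'\<in>{0..2*pi}. f z = f z'"
proof -
  define k where "k = \<lfloor>z / (2*pi)\<rfloor>"
  define z' where "z' = z + of_int (-k) * (2*pi)"
  have "f z' = f z" unfolding z'_def by (rule per_int[of f "2*pi"]) (rule assms)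
  moreover have "of_int k \<le> z/(2*pi)" "z/(2*pi) < of_int k + 1" unfolding k_def by linarith+
  hence "0 \<le> z'" "z' \<le> 2*pi" unfolding z'_def using pi_gt_zero
    by (auto simp: field_simps)
  ultimately show ?thesis by (intro bexI[of _ z']) auto
qed

lemma second_deriv_test:
  fixes g g1 :: "real \<Rightarrow> real" and g2 :: real
  assumes d1: "\<And>y. (g has_real_derivative g1 y) (at y)"
    and d2: "(g1 has_real_derivative g2) (at z)"
    and mx: "\<And>y. g y \<le> g z"
  shows "g1 z = 0 \<and> g2 \<le> 0"
proof -
  have z0: "g1 z = 0" by (rule DERIV_local_max[OF d1 zero_less_one]) (use mx in auto)
  moreover have "g2 \<le> 0"
  proof (rule ccontr)
    assume "\<not> g2 \<le> 0"
    then obtain d where d: "d > 0" "\<And>h. h > 0 \<Longrightarrow> h < d \<Longrightarrow> g1 z < g1 (z + h)"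
      using DERIV_pos_inc_right[OF d2] by force
    obtain w where w: "w > z" "w < z + d/2" "g (z + d/2) - g z = (z + d/2 - z) * g1 w"
      using MVT2[of z "z + d/2" g g1] d1 d by auto
    have "g1 w > 0" using d(2)[of "w - z"] w z0 by auto
    hence "d * g1 w > 0" using d by simp
    hence "g (z + d/2) > g z" using w by simp
    with mx show False by (meson not_le)
  qed
  ultimately show ?thesis by simp
qed

lemma mp_core:
  fixes w wt :: "real \<Rightarrow> real \<Rightarrow> real"
  assumes cont: "continuous_on (UNIV \<times> {0..<T}) (\<lambda>p. w (fst p) (snd p))"
    and per: "\<And>z t. w (z + 2*pi) t = w z t"
    and der: "\<And>z t. t \<in> {0..<T} \<Longrightarrow> ((\<lambda>\<tau>. w z \<tau>) has_real_derivative wt z t) (at t within {0..<T})"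
    and init: "\<And>z. w z 0 \<le> 0"
    and maxc: "\<And>z t. t \<in> {0<..<T'} \<Longrightarrow> (\<forall>y. w y t \<le> w z t) \<Longrightarrow> 0 < w z t \<Longrightarrow> wt z t < 0"
    and TT: "T' \<le> T"
    and t: "t \<in> {0..<T'}"
  shows "w z t \<le> 0"
proof (rule ccontr)
  assume neg: "\<not> w z t \<le> 0"
  obtain z1 where z1: "z1 \<in> {0..2*pi}" "w z t = w z1 t"
    using per_reduce[of "\<lambda>y. w y t"] per by force
  define \<eta> where "\<eta> = w z1 t"
  have eta: "\<eta> > 0" using neg z1 by (simp add: \<eta>_def)
  define K where "K = {0..2*pi} \<times> {0..t}"
  define A where "A = K \<inter> (\<lambda>p. w (fst p) (snd p)) -` {\<eta>..}"
  have KS: "K \<subseteq> UNIV \<times> {0..<T}" using t TT by (auto simp: K_def)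
  have cK: "continuous_on K (\<lambda>p. w (fst p) (snd p))" by (rule continuous_on_subset[OF cont KS])
  have cA0: "closed A" unfolding A_def
    by (rule continuous_closed_preimage[OF cK]) (auto simp: K_def closed_Times)
  have cK0: "compact K" unfolding K_def by (intro compact_Times compact_Icc)
  have "compact (K \<inter> A)" by (rule compact_Int_closed[OF cK0 cA0])
  moreover have "K \<inter> A = A" by (auto simp: A_def)
  ultimately have cA: "compact A" by simp
  have z1A: "(z1, t) \<in> A" using z1 t by (auto simp: A_def K_def \<eta>_def)
  have c1: "compact (snd ` A)" by (rule compact_continuous_image[OF continuous_on_snd cA]) (rule continuous_on_id)
  have c2: "snd ` A \<noteq> {}" using z1A by blast
  obtain ts where ts: "ts \<in> snd ` A" "\<And>s. s \<in> snd ` A \<Longrightarrow> ts \<le> s"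
    using compact_attains_inf[OF c1 c2] by blast
  then obtain zs where zs: "(zs, ts) \<in> A" by force
  have ts0: "0 \<le> ts" "ts \<le> t" "w zs ts \<ge> \<eta>" using zs by (auto simp: A_def K_def)
  have tspos: "ts > 0"
  proof (rule ccontr)
    assume "\<not> ts > 0" hence "ts = 0" using ts0 by simp
    thus False using ts0 init[of zs] eta by simp
  qed
  have cz: "continuous_on {0..2*pi} (\<lambda>y. w y ts)"
  proof -
    have "continuous_on {0..2*pi} ((\<lambda>p. w (fst p) (snd p)) \<circ> (\<lambda>y. (y, ts)))"
      apply (rule continuous_on_compose)
       apply (intro continuous_intros)
      apply (rule continuous_on_subset[OF cK])
      using ts0 by (auto simp: K_def)
    thus ?thesis by (simp add: o_def)
  qed
  obtain zm where zm: "zm \<in> {0..2*pi}" "\<And>y. y \<in> {0..2*pi} \<Longrightarrow> w y ts \<le> w zm ts"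
    using continuous_attains_sup[OF compact_Icc _ cz] by auto
  have gm: "\<forall>y. w y ts \<le> w zm ts"
  proof
    fix y
    obtain y' where "y' \<in> {0..2*pi}" "w y ts = w y' ts"
      using per_reduce[of "\<lambda>y. w y ts"] per by force
    thus "w y ts \<le> w zm ts" using zm by simp
  qed
  have zsK: "zs \<in> {0..2*pi}" using zs by (auto simp: A_def K_def)
  have wpos: "w zm ts \<ge> \<eta>" using zm(2)[OF zsK] ts0 by simp
  have tsT': "ts \<in> {0<..<T'}" using tspos ts0 t by auto
  have neg: "wt zm ts < 0" using maxc[OF tsT' gm] wpos eta by simp
  have "((\<lambda>\<tau>. w zm \<tau>) has_real_derivative wt zm ts) (at ts within {0..<T})"
    using der tsT' TT by auto
  hence "((\<lambda>\<tau>. w zm \<tau>) has_real_derivative wt zm ts) (at ts within {0<..<T})"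
    by (rule DERIV_subset) auto
  hence "((\<lambda>\<tau>. w zm \<tau>) has_real_derivative wt zm ts) (at ts)"
    using at_within_open[of ts "{0<..<T}"] tsT' TT by auto
  then obtain d where d: "d > 0" "\<And>h. h > 0 \<Longrightarrow> h < d \<Longrightarrow> w zm ts < w zm (ts - h)"
    using DERIV_neg_dec_left[OF _ neg] by metis
  define h where "h = min d ts / 2"
  have h: "h > 0" "h < d" "h < ts" using d tspos by (auto simp: h_def)
  have "w zm (ts - h) > \<eta>" using d(2)[OF h(1,2)] wpos by simp
  hence "(zm, ts - h) \<in> A" using zm h ts0 by (auto simp: A_def K_def)
  hence "ts \<le> ts - h" using ts(2) by force
  thus False using h by simp
qed


lemma mp:
  fixes u ut :: "real \<Rightarrow> real \<Rightarrow> real"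
  assumes cont: "continuous_on (UNIV \<times> {0..<T}) (\<lambda>p. u (fst p) (snd p))"
    and per: "\<And>z t. u (z + 2*pi) t = u z t"
    and der: "\<And>z t. t \<in> {0..<T} \<Longrightarrow> ((\<lambda>\<tau>. u z \<tau>) has_real_derivative ut z t) (at t within {0..<T})"
    and init: "\<And>z. u z 0 \<le> M"
    and maxc: "\<And>z t. t \<in> {0<..<T'} \<Longrightarrow> (\<forall>y. u y t \<le> u z t) \<Longrightarrow> M < u z t \<Longrightarrow> ut z t \<le> K * (u z t - M)"
    and TT: "T' \<le> T"
    and t: "t \<in> {0..<T'}"
  shows "u z t \<le> M"
proof -
  have main: "exp (- K * t) * (u z t - M) - \<epsilon> * (1 + t) \<le> 0" if eps: "\<epsilon> > 0" for \<epsilon>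
  proof -
    define w where "w = (\<lambda>z t. exp (- K * t) * (u z t - M) - \<epsilon> * (1 + t))"
    define wt where "wt = (\<lambda>z t. exp (- K * t) * (ut z t - K * (u z t - M)) - \<epsilon>)"
    have "w z t \<le> 0"
    proof (rule mp_core[where w = w and z = z and t = t and wt = wt and T = T and T' = T'])
      show "continuous_on (UNIV \<times> {0..<T}) (\<lambda>p. w (fst p) (snd p))"
        unfolding w_def by (auto intro!: continuous_intros cont)
      show "\<And>z t. w (z + 2*pi) t = w z t" unfolding w_def using per by simp
      show "((\<lambda>\<tau>. w z \<tau>) has_real_derivative wt z t) (at t within {0..<T})" if "t \<in> {0..<T}" for z t
        unfolding w_def wt_def
        by (rule derivative_eq_intros der[OF that] refl | simp)+ (simp add: algebra_simps)
      show "\<And>z. w z 0 \<le> 0" unfolding w_def using init eps by (simp add: algebra_simps) (smt (verit) init)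
      show "wt z t < 0" if tt: "t \<in> {0<..<T'}" and mx: "\<forall>y. w y t \<le> w z t" and pos: "0 < w z t" for z t
      proof -
        have e: "exp (- K * t) > 0" by simp
        have "\<forall>y. u y t \<le> u z t"
        proof
          fix y have "w y t \<le> w z t" using mx by simp
          hence "exp (- K * t) * (u y t - M) \<le> exp (- K * t) * (u z t - M)" unfolding w_def by simp
          thus "u y t \<le> u z t" using e by (simp add: mult_le_cancel_left)
        qed
        moreover have "M < u z t"
        proof -
          have "exp (- K * t) * (u z t - M) > \<epsilon> * (1 + t)" using pos unfolding w_def by simp
          moreover have "\<epsilon> * (1 + t) > 0" using eps tt by simp
          ultimately have "exp (- K * t) * (u z t - M) > 0" by linarith
          thus ?thesis using e by (simp add: zero_less_mult_iff)
        qed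
        ultimately have "ut z t - K * (u z t - M) \<le> 0" using maxc[OF tt] by simp
        hence "exp (- K * t) * (ut z t - K * (u z t - M)) \<le> 0" using e by (simp add: mult_nonneg_nonpos)
        thus ?thesis unfolding wt_def using eps by simp
      qed
    qed (use TT t in auto)
    thus ?thesis unfolding w_def .
  qed
  have "exp (- K * t) * (u z t - M) \<le> 0"
  proof (rule ccontr)
    assume "\<not> ?thesis"
    hence xp: "exp (- K * t) * (u z t - M) > 0" by simp
    have tp: "1 + t > 0" using t by simp
    define \<epsilon> where "\<epsilon> = exp (- K * t) * (u z t - M) / (2 * (1 + t))"
    have "\<epsilon> > 0" unfolding \<epsilon>_def using xp tp by simp
    from main[OF this] have "exp (- K * t) * (u z t - M) \<le> \<epsilon> * (1 + t)" by simp
    also have "\<epsilon> * (1 + t) = exp (- K * t) * (u z t - M) / 2" unfolding \<epsilon>_def using tp by (simp add: field_simps)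
    finally show False using xp by linarith
  qed
  thus ?thesis by (simp add: mult_le_0_iff)
qed


lemma smooth_unpack:
  assumes "smooth_zt T f"
  obtains f1 f2 where "continuous_on (UNIV \<times> {0..<T}) (\<lambda>p. f (fst p) (snd p))"
    "\<And>z t. t \<in> {0..<T} \<Longrightarrow> ((\<lambda>y. f y t) has_real_derivative f1 z t) (at z)"
    "\<And>z t. t \<in> {0..<T} \<Longrightarrow> ((\<lambda>y. f1 y t) has_real_derivative f2 z t) (at z)"
proof -
  obtain D :: "nat \<Rightarrow> nat \<Rightarrow> real \<Rightarrow> real \<Rightarrow> real" where D: "D 0 0 = f"
    "\<forall>i j. continuous_on (UNIV \<times> {0..<T}) (\<lambda>p. D i j (fst p) (snd p)) \<and>
           (\<forall>z. \<forall>t\<in>{0..<T}.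
              ((\<lambda>y. D i j y t) has_real_derivative D (Suc i) j z t) (at z) \<and>
              ((\<lambda>\<tau>. D i j z \<tau>) has_real_derivative D i (Suc j) z t) (at t within {0..<T}))"
    using assms unfolding smooth_zt_def by blast
  show ?thesis
  proof (rule that[of "D 1 0" "D 2 0"])
    show "continuous_on (UNIV \<times> {0..<T}) (\<lambda>p. f (fst p) (snd p))" using D(2) D(1) by metis
    show "((\<lambda>y. f y t) has_real_derivative D 1 0 z t) (at z)" if "t \<in> {0..<T}" for z t
      using D(2) D(1) that by (metis One_nat_def)
    show "((\<lambda>y. D 1 0 y t) has_real_derivative D 2 0 z t) (at z)" if "t \<in> {0..<T}" for z t
      using D(2) that by (metis Suc_1)
  qed
qed

lemma ps_eq:
  assumes df: "\<And>y. ((\<lambda>y. f y t) has_real_derivative f1 y t) (at y)"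
  shows "ps \<phi> f z t = f1 z t / \<phi> z t"
  unfolding ps_def pz_def using DERIV_imp_deriv[OF df] by simp

lemma pss_eq:
  assumes df: "\<And>y. ((\<lambda>y. f y t) has_real_derivative f1 y t) (at y)"
    and df1: "\<And>y. ((\<lambda>y. f1 y t) has_real_derivative f2 y t) (at y)"
    and dp: "\<And>y. ((\<lambda>y. \<phi> y t) has_real_derivative p1 y t) (at y)"
    and pos: "\<And>y. \<phi> y t > 0"
  shows "pss \<phi> f z t = (f2 z t * \<phi> z t - f1 z t * p1 z t) / (\<phi> z t)^3"
proof -
  have e: "(\<lambda>y. ps \<phi> f y t) = (\<lambda>y. f1 y t / \<phi> y t)" using ps_eq[of f t f1, OF df] by auto
  have "((\<lambda>y. f1 y t / \<phi> y t) has_real_derivative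
          (f2 z t * \<phi> z t - f1 z t * p1 z t) / (\<phi> z t * \<phi> z t)) (at z)"
    by (rule DERIV_divide[OF df1 dp]) (use pos[of z] in simp)
  hence "deriv (\<lambda>y. ps \<phi> f y t) z = (f2 z t * \<phi> z t - f1 z t * p1 z t) / (\<phi> z t * \<phi> z t)"
    unfolding e by (rule DERIV_imp_deriv)
  thus ?thesis unfolding pss_def ps_def[of \<phi> "ps \<phi> f"] pz_def
    by (simp add: power3_eq_cube)
qed

lemma ratio_crit:
  fixes x x1 y y1 :: "real \<Rightarrow> real" and x2 y2 :: real
  assumes dx: "\<And>v. (x has_real_derivative x1 v) (at v)"
    and dx1: "(x1 has_real_derivative x2) (at z)"
    and dy: "\<And>v. (y has_real_derivative y1 v) (at v)"
    and dy1: "(y1 has_real_derivative y2) (at z)"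
    and pos: "\<And>v. y v > 0"
    and mx: "\<And>v. x v / y v \<le> x z / y z"
  shows "x1 z * y z = x z * y1 z \<and> x2 * y z - x z * y2 \<le> 0"
proof -
  define g1 where "g1 = (\<lambda>v. (x1 v * y v - x v * y1 v) / (y v * y v))"
  have d1: "((\<lambda>v. x v / y v) has_real_derivative g1 v) (at v)" for v
    unfolding g1_def by (rule DERIV_divide[OF dx dy]) (use pos[of v] in simp)
  define N' where "N' = (x1 z * y1 z + x2 * y z) - (x z * y2 + x1 z * y1 z)"
  define D' where "D' = y z * y1 z + y1 z * y z"
  have dN: "((\<lambda>v. x1 v * y v - x v * y1 v) has_real_derivative N') (at z)"
    unfolding N'_def
  proof (rule DERIV_diff)
    show "((\<lambda>v. x1 v * y v) has_real_derivative x1 z * y1 z + x2 * y z) (at z)"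
      by (rule DERIV_mult'[OF dx1 dy])
    show "((\<lambda>v. x v * y1 v) has_real_derivative x z * y2 + x1 z * y1 z) (at z)"
      by (rule DERIV_mult'[OF dx dy1])
  qed
  have d2: "(g1 has_real_derivative
     (N' * (y z * y z) - (x1 z * y z - x z * y1 z) * D') / ((y z * y z) * (y z * y z))) (at z)"
    unfolding g1_def D'_def
    by (rule DERIV_divide[OF dN DERIV_mult'[OF dy dy]]) (use pos[of z] in simp)
  have r: "g1 z = 0 \<and> (N' * (y z * y z) - (x1 z * y z - x z * y1 z) * D') / ((y z * y z) * (y z * y z)) \<le> 0"
    by (rule second_deriv_test[OF d1 d2 mx])
  have yp: "y z > 0" by (rule pos)
  from r have c1: "x1 z * y z - x z * y1 z = 0" unfolding g1_def using yp by simp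
  from r have "(x2 * y z - x z * y2) * (y z * y z) / ((y z * y z) * (y z * y z)) \<le> 0"
    unfolding c1 N'_def by (simp add: algebra_simps)
  hence "(x2 * y z - x z * y2) / (y z * y z) \<le> 0" using yp by (simp add: field_simps)
  hence "x2 * y z - x z * y2 \<le> 0" using yp by (smt (verit) divide_pos_pos mult_pos_pos)
  thus ?thesis using c1 by simp
qed

lemma ratio_alg:
  fixes p p1 x x1 x2 y y1 y2 w w1 xt yt :: real
  assumes pos: "p > 0" "x > 0" "y > 0" "w > 0"
    and crit1: "x1 * y = x * y1" and crit2: "x2 * y - x * y2 \<le> 0"
    and xt: "xt = (x2 * p - x1 * p1) / p^3 + (x1 / p) * ((y1 / p) / y + (w1 / p) / w)
                 - 2 * (x^4 - (y^2 - w^2)^2) / (x * y^2 * w^2)"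
    and yt: "yt = (y2 * p - y1 * p1) / p^3 + (y1 / p) * ((x1 / p) / x + (w1 / p) / w)
                 - 2 * (y^4 - (x^2 - w^2)^2) / (x^2 * y * w^2)"
  shows "y * xt - x * yt \<le> -4 * (x^2 - y^2) * (x^2 + y^2 - w^2) / (x * y * w^2)"
proof -
  have D: "y * ((x2 * p - x1 * p1) / p^3) - x * ((y2 * p - y1 * p1) / p^3) = (x2 * y - x * y2) / p^2"
  proof -
    have "y * ((x2 * p - x1 * p1) / p^3) - x * ((y2 * p - y1 * p1) / p^3)
        = (y * (x2 * p - x1 * p1) - x * (y2 * p - y1 * p1)) / p^3"
      using pos by (simp add: field_simps)
    also have "y * (x2 * p - x1 * p1) - x * (y2 * p - y1 * p1) = ((x2 * y - x * y2) * p - p1 * (x1 * y - x * y1))"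
      by (simp add: algebra_simps)
    also have "((x2 * y - x * y2) * p - p1 * (x1 * y - x * y1)) / p^3 = (x2 * y - x * y2) / p^2"
      using crit1 pos by (simp add: power3_eq_cube power2_eq_square)
    finally show ?thesis .
  qed
  have D0: "(x2 * y - x * y2) / p^2 \<le> 0" using crit2 by (simp add: divide_le_0_iff)
  have G: "y * ((x1 / p) * ((y1 / p) / y + (w1 / p) / w)) - x * ((y1 / p) * ((x1 / p) / x + (w1 / p) / w)) = 0"
  proof -
    have "y * ((x1 / p) * ((y1 / p) / y + (w1 / p) / w)) - x * ((y1 / p) * ((x1 / p) / x + (w1 / p) / w))
        = (w1 / w) * (x1 * y - x * y1) / p^2"
      using pos by (simp add: field_simps power2_eq_square)
    thus ?thesis using crit1 by simp
  qed
  have R: "y * (- 2 * (x^4 - (y^2 - w^2)^2) / (x * y^2 * w^2)) - x * (- 2 * (y^4 - (x^2 - w^2)^2) / (x^2 * y * w^2))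
      = -4 * (x^2 - y^2) * (x^2 + y^2 - w^2) / (x * y * w^2)"
  proof -
    have e1: "y * (- 2 * (x^4 - (y^2 - w^2)^2) / (x * y^2 * w^2)) = - 2 * (x^4 - (y^2 - w^2)^2) / (x * y * w^2)"
      using pos by (simp add: power2_eq_square)
    have e2: "x * (- 2 * (y^4 - (x^2 - w^2)^2) / (x^2 * y * w^2)) = - 2 * (y^4 - (x^2 - w^2)^2) / (x * y * w^2)"
      using pos by (simp add: power2_eq_square)
    have e3: "-2*(x^4 - (y^2 - w^2)^2) + 2 * (y^4 - (x^2 - w^2)^2) = -4 * (x^2 - y^2) * (x^2 + y^2 - w^2)"
      by algebra
    have e4: "- 2 * (x^4 - (y^2 - w^2)^2) - - 2 * (y^4 - (x^2 - w^2)^2) = -4 * (x^2 - y^2) * (x^2 + y^2 - w^2)"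
      using e3 by simp
    show ?thesis unfolding e1 e2 diff_divide_distrib[symmetric] e4 ..
  qed
  have "y * xt - x * yt = (y * ((x2 * p - x1 * p1) / p^3) - x * ((y2 * p - y1 * p1) / p^3))
     + (y * ((x1 / p) * ((y1 / p) / y + (w1 / p) / w)) - x * ((y1 / p) * ((x1 / p) / x + (w1 / p) / w)))
     + (y * (- 2 * (x^4 - (y^2 - w^2)^2) / (x * y^2 * w^2)) - x * (- 2 * (y^4 - (x^2 - w^2)^2) / (x^2 * y * w^2)))"
  proof -
    have gen: "\<And>A B C A' B' C'. y*(A + B - C) - x*(A' + B' - C') = (y*A - x*A') + (y*B - x*B') + (y*(-C) - x*(-C'))"
      by (simp add: algebra_simps)
    show ?thesis unfolding xt yt gen by (simp add: minus_divide_left)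
  qed
  also have "\<dots> \<le> -4 * (x^2 - y^2) * (x^2 + y^2 - w^2) / (x * y * w^2)"
    unfolding D G R using D0 by simp
  finally show ?thesis .
qed


lemma ord_ineq:
  fixes x y w N \<alpha> :: real
  assumes pos: "x > 0" "y > 0" "w > 0" "\<alpha> > 0" and ax: "\<alpha> \<le> x" and ay: "\<alpha> \<le> y"
    and q: "1 < x / y"
    and N: "N \<le> -4 * (x^2 - y^2) * (x^2 + y^2 - w^2) / (x * y * w^2)"
  shows "N / (y * y) \<le> (8 / \<alpha>^2) * (x / y - 1)"
proof -
  have xy: "x > y" using q pos by (simp add: less_divide_eq)
  have d: "x^2 - y^2 > 0" using xy pos by (simp add: power_strict_mono)
  have "-4 * (x^2 - y^2) * (x^2 + y^2 - w^2) \<le> 4 * (x^2 - y^2) * w^2"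
  proof -
    have "-(x^2 + y^2 - w^2) \<le> w^2" by (simp add: add_nonneg_nonneg)
    hence "(x^2 - y^2) * (-(x^2 + y^2 - w^2)) \<le> (x^2 - y^2) * w^2"
      using d by (intro mult_left_mono) auto
    thus ?thesis by (simp add: algebra_simps)
  qed
  hence "-4 * (x^2 - y^2) * (x^2 + y^2 - w^2) / (x * y * w^2) \<le> 4 * (x^2 - y^2) * w^2 / (x * y * w^2)"
    using pos by (intro divide_right_mono) auto
  also have "\<dots> = 4 * (x^2 - y^2) / (x * y)" using pos by (simp add: power2_eq_square)
  finally have N2: "N \<le> 4 * (x^2 - y^2) / (x * y)" using N by linarith
  have "N / (y * y) \<le> 4 * (x^2 - y^2) / (x * y) / (y * y)"
    using N2 pos by (intro divide_right_mono) auto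
  also have "\<dots> = 4 * (x / y - 1) * (1 / (y * y) + 1 / (x * y))"
    using pos by (simp add: field_simps power2_eq_square)
  also have "\<dots> \<le> 4 * (x / y - 1) * (2 / \<alpha>^2)"
  proof -
    have "1 / (y * y) \<le> 1 / \<alpha>^2" using pos ay
      by (simp add: power2_eq_square frac_le mult_mono)
    moreover have "1 / (x * y) \<le> 1 / \<alpha>^2" using pos ax ay
      by (simp add: power2_eq_square frac_le mult_mono)
    ultimately have "1 / (y * y) + 1 / (x * y) \<le> 2 / \<alpha>^2" by simp
    moreover have "4 * (x / y - 1) \<ge> 0" using q by simp
    ultimately show ?thesis by (intro mult_left_mono) auto
  qed
  also have "\<dots> = (8 / \<alpha>^2) * (x / y - 1)" by simp
  finally show ?thesis .
qed

lemma compact_bounds: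
  fixes f :: "real \<Rightarrow> real \<Rightarrow> real"
  assumes cont: "continuous_on (UNIV \<times> {0..<T}) (\<lambda>p. f (fst p) (snd p))"
    and per: "\<And>z t. f (z + 2*pi) t = f z t"
    and pos: "\<And>z t. t \<in> {0..<T} \<Longrightarrow> f z t > 0"
    and T': "0 \<le> T'" "T' < T"
  obtains \<alpha> \<beta> where "\<alpha> > 0" "\<And>z t. t \<in> {0..T'} \<Longrightarrow> \<alpha> \<le> f z t \<and> f z t \<le> \<beta>"
proof -
  define K where "K = {0..2*pi} \<times> {0..T'}"
  have KS: "K \<subseteq> UNIV \<times> {0..<T}" using T' by (auto simp: K_def)
  have cK: "continuous_on K (\<lambda>p. f (fst p) (snd p))" by (rule continuous_on_subset[OF cont KS])
  have kK: "compact K" unfolding K_def by (intro compact_Times compact_Icc)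
  have nK: "K \<noteq> {}" using T' by (auto simp: K_def)
  obtain pm where pm: "pm \<in> K" "\<And>q. q \<in> K \<Longrightarrow> f (fst q) (snd q) \<le> f (fst pm) (snd pm)"
    using continuous_attains_sup[OF kK nK cK] by blast
  obtain pn where pn: "pn \<in> K" "\<And>q. q \<in> K \<Longrightarrow> f (fst pn) (snd pn) \<le> f (fst q) (snd q)"
    using continuous_attains_inf[OF kK nK cK] by blast
  have apos: "f (fst pn) (snd pn) > 0" using pn(1) KS pos by (cases pn) auto
  show ?thesis
  proof (rule that[of "f (fst pn) (snd pn)" "f (fst pm) (snd pm)"])
    show "f (fst pn) (snd pn) > 0" by (rule apos)
    fix z t assume t: "t \<in> {0..T'}"
    obtain z' where z': "z' \<in> {0..2*pi}" "f z t = f z' t"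
      using per_reduce[of "\<lambda>y. f y t"] per by force
    have "(z', t) \<in> K" using z' t by (auto simp: K_def)
    thus "f (fst pn) (snd pn) \<le> f z t \<and> f z t \<le> f (fst pm) (snd pm)"
      using pn(2) pm(2) z' by force
  qed
qed


lemma order_preserved:
  fixes p x y w p1 x1 x2 y1 y2 w1 XT YT :: "real \<Rightarrow> real \<Rightarrow> real"
  assumes contx: "continuous_on (UNIV \<times> {0..<T}) (\<lambda>p. x (fst p) (snd p))"
    and conty: "continuous_on (UNIV \<times> {0..<T}) (\<lambda>p. y (fst p) (snd p))"
    and perx: "\<And>z t. x (z + 2*pi) t = x z t"
    and pery: "\<And>z t. y (z + 2*pi) t = y z t"
    and pos: "\<And>z t. t \<in> {0..<T} \<Longrightarrow> p z t > 0 \<and> x z t > 0 \<and> y z t > 0 \<and> w z t > 0"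
    and dx: "\<And>z t. t \<in> {0..<T} \<Longrightarrow> ((\<lambda>v. x v t) has_real_derivative x1 z t) (at z)"
    and dx1: "\<And>z t. t \<in> {0..<T} \<Longrightarrow> ((\<lambda>v. x1 v t) has_real_derivative x2 z t) (at z)"
    and dy: "\<And>z t. t \<in> {0..<T} \<Longrightarrow> ((\<lambda>v. y v t) has_real_derivative y1 z t) (at z)"
    and dy1: "\<And>z t. t \<in> {0..<T} \<Longrightarrow> ((\<lambda>v. y1 v t) has_real_derivative y2 z t) (at z)"
    and xt: "\<And>z t. t \<in> {0..<T} \<Longrightarrow> ((\<lambda>\<tau>. x z \<tau>) has_real_derivative XT z t) (at t within {0..<T})"
    and yt: "\<And>z t. t \<in> {0..<T} \<Longrightarrow> ((\<lambda>\<tau>. y z \<tau>) has_real_derivative YT z t) (at t within {0..<T})"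
    and XT: "\<And>z t. t \<in> {0..<T} \<Longrightarrow> XT z t = (x2 z t * p z t - x1 z t * p1 z t) / p z t ^ 3
        + (x1 z t / p z t) * ((y1 z t / p z t) / y z t + (w1 z t / p z t) / w z t)
        - 2 * (x z t ^ 4 - (y z t ^ 2 - w z t ^ 2) ^ 2) / (x z t * y z t ^ 2 * w z t ^ 2)"
    and YT: "\<And>z t. t \<in> {0..<T} \<Longrightarrow> YT z t = (y2 z t * p z t - y1 z t * p1 z t) / p z t ^ 3
        + (y1 z t / p z t) * ((x1 z t / p z t) / x z t + (w1 z t / p z t) / w z t)
        - 2 * (y z t ^ 4 - (x z t ^ 2 - w z t ^ 2) ^ 2) / (x z t ^ 2 * y z t * w z t ^ 2)"
    and init: "\<And>z. x z 0 \<le> y z 0"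
    and t: "t \<in> {0..<T}"
  shows "x z t \<le> y z t"
proof -
  define T' where "T' = (t + T) / 2"
  have T': "0 \<le> T'" "T' < T" "t < T'" using t by (auto simp: T'_def)
  obtain \<alpha>x \<beta>x where ax: "\<alpha>x > 0" "\<And>z t. t \<in> {0..T'} \<Longrightarrow> \<alpha>x \<le> x z t \<and> x z t \<le> \<beta>x"
    using compact_bounds[OF contx perx _ T'(1,2)] pos by blast
  obtain \<alpha>y \<beta>y where ay: "\<alpha>y > 0" "\<And>z t. t \<in> {0..T'} \<Longrightarrow> \<alpha>y \<le> y z t \<and> y z t \<le> \<beta>y"
    using compact_bounds[OF conty pery _ T'(1,2)] pos by blast
  define \<alpha> where "\<alpha> = min \<alpha>x \<alpha>y"
  have a: "\<alpha> > 0" using ax ay by (simp add: \<alpha>_def)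
  have "x z t / y z t \<le> 1"
  proof (rule mp[where u = "\<lambda>z t. x z t / y z t" and
        ut = "\<lambda>z t. (XT z t * y z t - x z t * YT z t) / (y z t * y z t)" and T = T and T' = T'
        and K = "8 / \<alpha>^2"])
    show "continuous_on (UNIV \<times> {0..<T}) (\<lambda>p. x (fst p) (snd p) / y (fst p) (snd p))"
      by (rule continuous_on_divide[OF contx conty]) (use pos in \<open>fastforce simp: less_imp_neq[symmetric]\<close>)
    show "\<And>z t. x (z + 2 * pi) t / y (z + 2 * pi) t = x z t / y z t" using perx pery by simp
    show "((\<lambda>\<tau>. x z \<tau> / y z \<tau>) has_real_derivative (XT z t * y z t - x z t * YT z t) / (y z t * y z t))
            (at t within {0..<T})" if "t \<in> {0..<T}" for z t
    proof -
      have "y z t > 0" using pos[OF that] by blast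
      thus ?thesis by (intro DERIV_divide[OF xt[OF that] yt[OF that]]) simp
    qed
    show "\<And>z. x z 0 / y z 0 \<le> 1" using init pos[of 0] T' by simp
    show "(XT z t * y z t - x z t * YT z t) / (y z t * y z t) \<le> 8 / \<alpha>^2 * (x z t / y z t - 1)"
      if tt: "t \<in> {0<..<T'}" and mx: "\<forall>v. x v t / y v t \<le> x z t / y z t" and q: "1 < x z t / y z t" for z t
    proof -
      have tT: "t \<in> {0..<T}" using tt T' by auto
      have cr: "x1 z t * y z t = x z t * y1 z t \<and> x2 z t * y z t - x z t * y2 z t \<le> 0"
        by (rule ratio_crit[OF dx[OF tT] dx1[OF tT] dy[OF tT] dy1[OF tT]])
           (use pos[OF tT] mx in auto)
      have ra: "y z t * XT z t - x z t * YT z t \<le> -4 * (x z t ^ 2 - y z t ^ 2) * (x z t ^ 2 + y z t ^ 2 - w z t ^ 2) / (x z t * y z t * w z t ^ 2)"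
        by (rule ratio_alg[OF _ _ _ _ _ _ XT[OF tT] YT[OF tT]]) (use pos[OF tT] cr in auto)
      have b: "\<alpha> \<le> x z t" "\<alpha> \<le> y z t" using ax(2)[of t z] ay(2)[of t z] tt by (auto simp: \<alpha>_def)
      show ?thesis
        by (rule ord_ineq[where w = "w z t"]) (use pos[OF tT] a b q ra in \<open>auto simp: mult.commute\<close>)
    qed
  qed (use T' t in auto)
  thus ?thesis using pos[OF t] by simp
qed





lemma c_alg0:
  fixes A B C :: real
  assumes "0 \<le> A" "0 \<le> B" "A \<le> C" "B \<le> C"
  shows "A * B \<le> C * C - (A - B)^2"
proof -
  have e: "(A - B)^2 = A*A - 2*(A*B) + B*B" by (simp add: power2_eq_square algebra_simps)
  show ?thesis
  proof (cases "A \<le> B")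
    case True
    have "B * B \<le> C * C" using assms by (intro mult_mono) auto
    moreover have "A * A \<le> A * B" using True assms by (intro mult_left_mono) auto
    ultimately show ?thesis unfolding e by linarith
  next
    case False
    have "A * A \<le> C * C" using assms by (intro mult_mono) auto
    moreover have "B * B \<le> A * B" using False assms by (intro mult_right_mono) auto
    ultimately show ?thesis unfolding e by linarith
  qed
qed

lemma c_alg:
  fixes a b c :: real
  assumes "a > 0" "b > 0" "c > 0" "a \<le> c" "b \<le> c"
  shows "a^2 * b^2 \<le> c^4 - (a^2 - b^2)^2"
proof -
  have A: "a^2 \<le> c^2" "b^2 \<le> c^2" using assms by (auto intro: power_mono)
  have "c^4 = c^2 * c^2" by (simp add: power4_eq_xxxx power2_eq_square)
  thus ?thesis using c_alg0[of "a^2" "b^2" "c^2"] A by simp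
qed

lemma c_bound:
  fixes p a b c p1 a1 b1 c1 c2 CT :: "real \<Rightarrow> real \<Rightarrow> real"
  assumes contc: "continuous_on (UNIV \<times> {0..<T}) (\<lambda>p. c (fst p) (snd p))"
    and perc: "\<And>z t. c (z + 2*pi) t = c z t"
    and pos: "\<And>z t. t \<in> {0..<T} \<Longrightarrow> p z t > 0 \<and> a z t > 0 \<and> b z t > 0 \<and> c z t > 0"
    and dc: "\<And>z t. t \<in> {0..<T} \<Longrightarrow> ((\<lambda>v. c v t) has_real_derivative c1 z t) (at z)"
    and dc1: "\<And>z t. t \<in> {0..<T} \<Longrightarrow> ((\<lambda>v. c1 v t) has_real_derivative c2 z t) (at z)"
    and ct: "\<And>z t. t \<in> {0..<T} \<Longrightarrow> ((\<lambda>\<tau>. c z \<tau>) has_real_derivative CT z t) (at t within {0..<T})"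
    and CT: "\<And>z t. t \<in> {0..<T} \<Longrightarrow> CT z t = (c2 z t * p z t - c1 z t * p1 z t) / p z t ^ 3
        + (c1 z t / p z t) * ((a1 z t / p z t) / a z t + (b1 z t / p z t) / b z t)
        - 2 * (c z t ^ 4 - (a z t ^ 2 - b z t ^ 2) ^ 2) / (c z t * a z t ^ 2 * b z t ^ 2)"
    and ord: "\<And>z t. t \<in> {0..<T} \<Longrightarrow> a z t \<le> c z t \<and> b z t \<le> c z t"
    and init: "\<And>z. c z 0 ^ 2 \<le> C"
    and t: "t \<in> {0..<T}"
  shows "c z t ^ 2 + 4 * t \<le> C"
proof -
  have "c z t * c z t + 4 * t \<le> C"
  proof (rule mp[where u = "\<lambda>z t. c z t * c z t + 4 * t" and ut = "\<lambda>z t. c z t * CT z t + CT z t * c z t + 4 * 1"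
      and T = T and T' = T and K = 0])
    show "continuous_on (UNIV \<times> {0..<T}) (\<lambda>p. c (fst p) (snd p) * c (fst p) (snd p) + 4 * snd p)"
      by (intro continuous_intros contc)
    show "\<And>z t. c (z + 2 * pi) t * c (z + 2 * pi) t + 4 * t = c z t * c z t + 4 * t" using perc by simp
    show "((\<lambda>\<tau>. c z \<tau> * c z \<tau> + 4 * \<tau>) has_real_derivative c z t * CT z t + CT z t * c z t + 4 * 1) (at t within {0..<T})"
      if "t \<in> {0..<T}" for z t
      by (rule DERIV_add[OF DERIV_mult'[OF ct[OF that] ct[OF that]] DERIV_cmult[OF DERIV_ident]])
    show "\<And>z. c z 0 * c z 0 + 4 * 0 \<le> C" using init by (simp add: power2_eq_square)
    show "c z t * CT z t + CT z t * c z t + 4 * 1 \<le> 0 * (c z t * c z t + 4 * t - C)"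
      if tt: "t \<in> {0<..<T}" and mx: "\<forall>y. c y t * c y t + 4 * t \<le> c z t * c z t + 4 * t" for z t
    proof -
      have tT: "t \<in> {0..<T}" using tt by auto
      note P = pos[OF tT, of z]
      have mx2: "c v t \<le> c z t" for v
      proof (rule ccontr)
        assume "\<not> c v t \<le> c z t"
        hence "c z t * c z t < c v t * c v t" using P by (intro mult_strict_mono) auto
        thus False using mx by (metis add_le_cancel_right not_le)
      qed
      have sd: "c1 z t = 0 \<and> c2 z t \<le> 0"
        by (rule second_deriv_test[OF dc[OF tT] dc1[OF tT]]) (use mx2 in auto)
      have r1: "(c2 z t * p z t - c1 z t * p1 z t) / p z t ^ 3 \<le> 0"
        using sd P by (simp add: divide_le_0_iff mult_nonpos_nonneg)
      have R: "a z t ^ 2 * b z t ^ 2 \<le> c z t ^ 4 - (a z t ^ 2 - b z t ^ 2) ^ 2"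
        using c_alg[of "a z t" "b z t" "c z t"] P ord[OF tT, of z] by auto
      have "2 * (a z t ^ 2 * b z t ^ 2) / (c z t * a z t ^ 2 * b z t ^ 2)
          \<le> 2 * (c z t ^ 4 - (a z t ^ 2 - b z t ^ 2) ^ 2) / (c z t * a z t ^ 2 * b z t ^ 2)"
        using R P by (intro divide_right_mono) auto
      moreover have "2 * (a z t ^ 2 * b z t ^ 2) / (c z t * a z t ^ 2 * b z t ^ 2) = 2 / c z t"
        using P by simp
      ultimately have r3: "2 / c z t \<le> 2 * (c z t ^ 4 - (a z t ^ 2 - b z t ^ 2) ^ 2) / (c z t * a z t ^ 2 * b z t ^ 2)"
        by simp
      have "CT z t \<le> - 2 / c z t" using CT[OF tT, of z] sd r1 r3 by simp
      hence "c z t * CT z t \<le> c z t * (- 2 / c z t)" using P by (intro mult_left_mono) auto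
      also have "\<dots> = -2" using P by simp
      finally show ?thesis by (simp add: mult.commute)
    qed
  qed (use t in auto)
  thus ?thesis by (simp add: power2_eq_square)
qed


lemma ca_ineq:
  fixes a b c D N :: real
  assumes pos: "a > 0" "b > 0" "c > 0" and ac: "a \<le> c" and bc: "b \<le> c" and cD: "c^2 \<le> D"
    and N: "N \<le> -4 * (c^2 - a^2) * (c^2 + a^2 - b^2) / (c * a * b^2)"
  shows "(c / a) * (N / (a * a)) \<le> -4 * ((c / a) * (c / a) - 1) / D"
proof -
  have ca2: "c^2 - a^2 \<ge> 0" using ac pos by (simp add: power_mono)
  have cb2: "b^2 \<le> c^2" using bc pos by (simp add: power_mono)
  have Dp: "D > 0" using cD pos by (smt (verit) zero_less_power)
  have "(c / a) * (N / (a * a)) \<le> (c / a) * ((-4 * (c^2 - a^2) * (c^2 + a^2 - b^2) / (c * a * b^2)) / (a * a))"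
    using N pos by (intro mult_left_mono divide_right_mono) auto
  also have "\<dots> = -4 * ((c^2 - a^2) * (c^2 + a^2 - b^2)) / (a^4 * b^2)"
    using pos by (simp add: field_simps power2_eq_square power4_eq_xxxx)
  also have "\<dots> \<le> -4 * ((c^2 - a^2) * a^2) / (a^4 * b^2)"
  proof -
    have "(c^2 - a^2) * a^2 \<le> (c^2 - a^2) * (c^2 + a^2 - b^2)"
      using ca2 cb2 by (intro mult_left_mono) auto
    thus ?thesis using pos by (intro divide_right_mono) auto
  qed
  also have "\<dots> = -4 * (c^2 - a^2) / (a^2 * b^2)"
    using pos by (simp add: field_simps power2_eq_square power4_eq_xxxx)
  also have "\<dots> \<le> -4 * (c^2 - a^2) / (a^2 * c^2)"
  proof -
    have "(c^2 - a^2) / (a^2 * c^2) \<le> (c^2 - a^2) / (a^2 * b^2)"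
      using ca2 cb2 pos by (intro divide_left_mono mult_left_mono) auto
    thus ?thesis unfolding times_divide_eq_right[symmetric] by linarith
  qed
  also have "\<dots> = -4 * ((c / a) * (c / a) - 1) / c^2"
    using pos by (simp add: field_simps power2_eq_square)
  also have "\<dots> \<le> -4 * ((c / a) * (c / a) - 1) / D"
  proof -
    have r: "(c / a) * (c / a) - 1 \<ge> 0" using ac pos
      by (simp add: field_simps) (simp add: mult_mono)
    have "((c / a) * (c / a) - 1) / D \<le> ((c / a) * (c / a) - 1) / c^2"
      using r cD pos Dp by (intro divide_left_mono) auto
    thus ?thesis unfolding times_divide_eq_right[symmetric] by linarith
  qed
  finally show ?thesis .
qed


lemma ratio_bound:
  fixes p a b c p1 a1 a2 b1 c1 c2 AT CT :: "real \<Rightarrow> real \<Rightarrow> real"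
  assumes conta: "continuous_on (UNIV \<times> {0..<T}) (\<lambda>p. a (fst p) (snd p))"
    and contc: "continuous_on (UNIV \<times> {0..<T}) (\<lambda>p. c (fst p) (snd p))"
    and pera: "\<And>z t. a (z + 2*pi) t = a z t"
    and perc: "\<And>z t. c (z + 2*pi) t = c z t"
    and pos: "\<And>z t. t \<in> {0..<T} \<Longrightarrow> p z t > 0 \<and> a z t > 0 \<and> b z t > 0 \<and> c z t > 0"
    and da: "\<And>z t. t \<in> {0..<T} \<Longrightarrow> ((\<lambda>v. a v t) has_real_derivative a1 z t) (at z)"
    and da1: "\<And>z t. t \<in> {0..<T} \<Longrightarrow> ((\<lambda>v. a1 v t) has_real_derivative a2 z t) (at z)"
    and dc: "\<And>z t. t \<in> {0..<T} \<Longrightarrow> ((\<lambda>v. c v t) has_real_derivative c1 z t) (at z)"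
    and dc1: "\<And>z t. t \<in> {0..<T} \<Longrightarrow> ((\<lambda>v. c1 v t) has_real_derivative c2 z t) (at z)"
    and at: "\<And>z t. t \<in> {0..<T} \<Longrightarrow> ((\<lambda>\<tau>. a z \<tau>) has_real_derivative AT z t) (at t within {0..<T})"
    and ct: "\<And>z t. t \<in> {0..<T} \<Longrightarrow> ((\<lambda>\<tau>. c z \<tau>) has_real_derivative CT z t) (at t within {0..<T})"
    and CT: "\<And>z t. t \<in> {0..<T} \<Longrightarrow> CT z t = (c2 z t * p z t - c1 z t * p1 z t) / p z t ^ 3
        + (c1 z t / p z t) * ((a1 z t / p z t) / a z t + (b1 z t / p z t) / b z t)
        - 2 * (c z t ^ 4 - (a z t ^ 2 - b z t ^ 2) ^ 2) / (c z t * a z t ^ 2 * b z t ^ 2)"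
    and AT: "\<And>z t. t \<in> {0..<T} \<Longrightarrow> AT z t = (a2 z t * p z t - a1 z t * p1 z t) / p z t ^ 3
        + (a1 z t / p z t) * ((c1 z t / p z t) / c z t + (b1 z t / p z t) / b z t)
        - 2 * (a z t ^ 4 - (c z t ^ 2 - b z t ^ 2) ^ 2) / (c z t ^ 2 * a z t * b z t ^ 2)"
    and ord: "\<And>z t. t \<in> {0..<T} \<Longrightarrow> a z t \<le> c z t \<and> b z t \<le> c z t"
    and cb: "\<And>z t. t \<in> {0..<T} \<Longrightarrow> c z t ^ 2 + 4 * t \<le> C"
    and init: "\<And>z. c z 0 / a z 0 \<le> L"
    and t: "t \<in> {0..<T}"
  shows "(c z t / a z t) * (c z t / a z t) - 1 \<le> (L * L - 1) / (C * C) * ((C - 4 * t) * (C - 4 * t))"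
proof -
  have T0: "0 \<in> {0..<T}" using t by auto
  have Cp: "C > 0" using cb[OF T0, of z] pos[OF T0, of z] by (smt (verit) zero_less_power)
  have Dp: "C - 4 * \<tau> > 0" if "\<tau> \<in> {0..<T}" for \<tau>
    using cb[OF that, of z] pos[OF that, of z] by (smt (verit) zero_less_power)
  define g where "g = (\<lambda>\<tau>::real. (C - 4 * \<tau>) * (C - 4 * \<tau>))"
  define g' where "g' = (\<lambda>\<tau>::real. (C - 4 * \<tau>) * (0 - 4 * 1) + (0 - 4 * 1) * (C - 4 * \<tau>))"
  define r where "r = (\<lambda>z t. c z t / a z t)"
  define RT where "RT = (\<lambda>z t. (CT z t * a z t - c z t * AT z t) / (a z t * a z t))"
  have gp: "g \<tau> > 0" if "\<tau> \<in> {0..<T}" for \<tau> using Dp[OF that] by (simp add: g_def)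
  have "(r z t * r z t - 1) / g t \<le> (L * L - 1) / (C * C)"
  proof (rule mp[where u = "\<lambda>z t. (r z t * r z t - 1) / g t" and
        ut = "\<lambda>z t. ((r z t * RT z t + RT z t * r z t - 0) * g t - (r z t * r z t - 1) * g' t) / (g t * g t)"
        and T = T and T' = T and K = 0])
    show "continuous_on (UNIV \<times> {0..<T}) (\<lambda>p. (r (fst p) (snd p) * r (fst p) (snd p) - 1) / g (snd p))"
    proof -
      have cr: "continuous_on (UNIV \<times> {0..<T}) (\<lambda>p. r (fst p) (snd p))"
        unfolding r_def by (rule continuous_on_divide[OF contc conta]) (use pos in \<open>fastforce simp: less_imp_neq[symmetric]\<close>)
      show ?thesis unfolding g_def
        by (intro continuous_intros cr) (use Dp in fastforce)
    qed
    show "\<And>z t. (r (z + 2 * pi) t * r (z + 2 * pi) t - 1) / g t = (r z t * r z t - 1) / g t"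
      using pera perc by (simp add: r_def)
    show "((\<lambda>\<tau>. (r z \<tau> * r z \<tau> - 1) / g \<tau>) has_real_derivative
           ((r z t * RT z t + RT z t * r z t - 0) * g t - (r z t * r z t - 1) * g' t) / (g t * g t))
            (at t within {0..<T})" if tt: "t \<in> {0..<T}" for z t
    proof -
      have a0: "a z t \<noteq> 0" using pos[OF tt, of z] by simp
      have dr: "((\<lambda>\<tau>. r z \<tau>) has_real_derivative RT z t) (at t within {0..<T})"
        unfolding r_def RT_def by (rule DERIV_divide[OF ct[OF tt] at[OF tt] a0])
      have dnum: "((\<lambda>\<tau>. r z \<tau> * r z \<tau> - 1) has_real_derivative r z t * RT z t + RT z t * r z t - 0) (at t within {0..<T})"
        by (rule DERIV_diff[OF DERIV_mult'[OF dr dr] DERIV_const])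
      have dlin: "((\<lambda>\<tau>. C - 4 * \<tau>) has_real_derivative 0 - 4 * 1) (at t within {0..<T})"
        by (rule DERIV_diff[OF DERIV_const DERIV_cmult[OF DERIV_ident]])
      have dden: "(g has_real_derivative g' t) (at t within {0..<T})"
        unfolding g_def g'_def by (rule DERIV_mult'[OF dlin dlin])
      show ?thesis by (rule DERIV_divide[OF dnum dden]) (use gp[OF tt] in simp)
    qed
    show "\<And>z. (r z 0 * r z 0 - 1) / g 0 \<le> (L * L - 1) / (C * C)"
    proof -
      fix z
      have "0 < r z 0" "r z 0 \<le> L" using pos[OF T0, of z] init[of z] by (auto simp: r_def)
      hence "r z 0 * r z 0 \<le> L * L" by (intro mult_mono) auto
      thus "(r z 0 * r z 0 - 1) / g 0 \<le> (L * L - 1) / (C * C)"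
        unfolding g_def using Cp by simp (intro divide_right_mono, auto)
    qed
    show "((r z t * RT z t + RT z t * r z t - 0) * g t - (r z t * r z t - 1) * g' t) / (g t * g t)
          \<le> 0 * ((r z t * r z t - 1) / g t - (L * L - 1) / (C * C))"
      if tt: "t \<in> {0<..<T}" and mx: "\<forall>y. (r y t * r y t - 1) / g t \<le> (r z t * r z t - 1) / g t" for z t
    proof -
      have tT: "t \<in> {0..<T}" using tt by auto
      note P = pos[OF tT, of z]
      have g0: "g t > 0" by (rule gp[OF tT])
      have mx2: "c v t / a v t \<le> c z t / a z t" for v
      proof (rule ccontr)
        assume "\<not> c v t / a v t \<le> c z t / a z t"
        hence "r z t < r v t" by (simp add: r_def)
        moreover have "r z t > 0" using P by (simp add: r_def)
        ultimately have "r z t * r z t < r v t * r v t" by (intro mult_strict_mono) auto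
        hence "(r z t * r z t - 1) / g t < (r v t * r v t - 1) / g t" using g0 by (intro divide_strict_right_mono) auto
        thus False using mx by (meson not_le)
      qed
      have cr: "c1 z t * a z t = c z t * a1 z t \<and> c2 z t * a z t - c z t * a2 z t \<le> 0"
        by (rule ratio_crit[OF dc[OF tT] dc1[OF tT] da[OF tT] da1[OF tT]]) (use pos[OF tT] mx2 in auto)
      have ra: "a z t * CT z t - c z t * AT z t \<le> -4 * (c z t ^ 2 - a z t ^ 2) * (c z t ^ 2 + a z t ^ 2 - b z t ^ 2) / (c z t * a z t * b z t ^ 2)"
        by (rule ratio_alg[OF _ _ _ _ _ _ CT[OF tT] AT[OF tT]]) (use P cr in auto)
      have ci: "r z t * RT z t \<le> -4 * (r z t * r z t - 1) / (C - 4 * t)"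
        unfolding r_def RT_def
        by (rule ca_ineq[where b = "b z t"]) (use P ord[OF tT, of z] cb[OF tT, of z] ra in \<open>auto simp: mult.commute\<close>)
      define D where "D = C - 4 * t"
      have D0: "D > 0" using Dp[OF tT] by (simp add: D_def)
      have gD: "g t = D * D" "g' t = -8 * D" by (simp_all add: g_def g'_def D_def)
      have "(r z t * RT z t + RT z t * r z t - 0) * g t - (r z t * r z t - 1) * g' t
            = 2 * (r z t * RT z t) * (D * D) + 8 * (r z t * r z t - 1) * D"
        unfolding gD by (simp add: algebra_simps)
      also have "\<dots> \<le> 2 * (-4 * (r z t * r z t - 1) / D) * (D * D) + 8 * (r z t * r z t - 1) * D"
        using ci D0 unfolding D_def[symmetric] by (intro add_right_mono mult_right_mono mult_left_mono) auto
      also have "\<dots> = 0" using D0 by (simp add: field_simps)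
      finally have "(r z t * RT z t + RT z t * r z t - 0) * g t - (r z t * r z t - 1) * g' t \<le> 0" .
      thus ?thesis using g0 by (simp add: divide_le_0_iff)
    qed
  qed (use t in auto)
  hence "r z t * r z t - 1 \<le> (L * L - 1) / (C * C) * g t"
    using gp[OF t] by (simp add: divide_le_eq)
  thus ?thesis by (simp add: r_def g_def)
qed


theorem lemma4p5:
  fixes T L :: real and \<phi> a b c :: "real \<Rightarrow> real \<Rightarrow> real"
  assumes flow: "warped_RF T \<phi> a b c"
    and init_order: "\<forall>z. 0 < a z 0 \<and> a z 0 \<le> b z 0 \<and> b z 0 \<le> c z 0"
    and lam: "1 \<le> L"
    and ratio_lower: "1 \<le> (SUP z. c z 0 / a z 0)"
    and ratio_upper: "(SUP z. c z 0 / a z 0) \<le> L"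
  shows "\<forall>z. \<forall>t\<in>{0..<T}.
           1 \<le> (c z t)\<^sup>2 / (a z t)\<^sup>2 \<and>
           (c z t)\<^sup>2 / (a z t)\<^sup>2
             \<le> exp (L\<^sup>2 - 1) * (L\<^sup>2 - 1) * (1 - 4 * t / (SUP y. c y 0)\<^sup>2)\<^sup>2 + 1"
proof (intro allI ballI)
  fix z t assume t: "t \<in> {0..<T}"
  have F: "smooth_zt T \<phi>" "smooth_zt T a" "smooth_zt T b" "smooth_zt T c"
    and per: "\<And>z t. \<phi> (z + 2*pi) t = \<phi> z t \<and> a (z + 2*pi) t = a z t \<and>
            b (z + 2*pi) t = b z t \<and> c (z + 2*pi) t = c z t"
    and F2: "\<And>z t. t \<in> {0..<T} \<Longrightarrow> 0 < \<phi> z t \<and> 0 < a z t \<and> 0 < b z t \<and> 0 < c z t \<and>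
        ((\<lambda>\<tau>. \<phi> z \<tau>) has_real_derivative
            \<phi> z t * (pss \<phi> a z t / a z t + pss \<phi> b z t / b z t + pss \<phi> c z t / c z t))
          (at t within {0..<T}) \<and>
        ((\<lambda>\<tau>. a z \<tau>) has_real_derivative
            pss \<phi> a z t + ps \<phi> a z t * (ps \<phi> b z t / b z t + ps \<phi> c z t / c z t)
            - 2 * (a z t ^ 4 - (b z t ^ 2 - c z t ^ 2) ^ 2) / (a z t * b z t ^ 2 * c z t ^ 2))
          (at t within {0..<T}) \<and>
        ((\<lambda>\<tau>. b z \<tau>) has_real_derivative
            pss \<phi> b z t + ps \<phi> b z t * (ps \<phi> a z t / a z t + ps \<phi> c z t / c z t)
            - 2 * (b z t ^ 4 - (a z t ^ 2 - c z t ^ 2) ^ 2) / (a z t ^ 2 * b z t * c z t ^ 2))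
          (at t within {0..<T}) \<and>
        ((\<lambda>\<tau>. c z \<tau>) has_real_derivative
            pss \<phi> c z t + ps \<phi> c z t * (ps \<phi> a z t / a z t + ps \<phi> b z t / b z t)
            - 2 * (c z t ^ 4 - (a z t ^ 2 - b z t ^ 2) ^ 2) / (a z t ^ 2 * b z t ^ 2 * c z t))
          (at t within {0..<T})"
    using flow unfolding warped_RF_def by auto
  obtain p1 p2 where P: "continuous_on (UNIV \<times> {0..<T}) (\<lambda>p. \<phi> (fst p) (snd p))"
    "\<And>z t. t \<in> {0..<T} \<Longrightarrow> ((\<lambda>y. \<phi> y t) has_real_derivative p1 z t) (at z)"
    using smooth_unpack[OF F(1)] by metis
  obtain a1 a2 where A: "continuous_on (UNIV \<times> {0..<T}) (\<lambda>p. a (fst p) (snd p))"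
    "\<And>z t. t \<in> {0..<T} \<Longrightarrow> ((\<lambda>y. a y t) has_real_derivative a1 z t) (at z)"
    "\<And>z t. t \<in> {0..<T} \<Longrightarrow> ((\<lambda>y. a1 y t) has_real_derivative a2 z t) (at z)"
    using smooth_unpack[OF F(2)] by metis
  obtain b1 b2 where B: "continuous_on (UNIV \<times> {0..<T}) (\<lambda>p. b (fst p) (snd p))"
    "\<And>z t. t \<in> {0..<T} \<Longrightarrow> ((\<lambda>y. b y t) has_real_derivative b1 z t) (at z)"
    "\<And>z t. t \<in> {0..<T} \<Longrightarrow> ((\<lambda>y. b1 y t) has_real_derivative b2 z t) (at z)"
    using smooth_unpack[OF F(3)] by metis
  obtain c1 c2 where C: "continuous_on (UNIV \<times> {0..<T}) (\<lambda>p. c (fst p) (snd p))"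
    "\<And>z t. t \<in> {0..<T} \<Longrightarrow> ((\<lambda>y. c y t) has_real_derivative c1 z t) (at z)"
    "\<And>z t. t \<in> {0..<T} \<Longrightarrow> ((\<lambda>y. c1 y t) has_real_derivative c2 z t) (at z)"
    using smooth_unpack[OF F(4)] by metis
  have pos: "\<And>z t. t \<in> {0..<T} \<Longrightarrow> \<phi> z t > 0 \<and> a z t > 0 \<and> b z t > 0 \<and> c z t > 0"
    using F2 by blast
  have psa: "ps \<phi> a z t = a1 z t / \<phi> z t" if "t \<in> {0..<T}" for z t by (rule ps_eq[of a t a1, OF A(2)[OF that]])
  have psb: "ps \<phi> b z t = b1 z t / \<phi> z t" if "t \<in> {0..<T}" for z t by (rule ps_eq[of b t b1, OF B(2)[OF that]])
  have psc: "ps \<phi> c z t = c1 z t / \<phi> z t" if "t \<in> {0..<T}" for z t by (rule ps_eq[of c t c1, OF C(2)[OF that]])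
  have pssa: "pss \<phi> a z t = (a2 z t * \<phi> z t - a1 z t * p1 z t) / (\<phi> z t)^3" if "t \<in> {0..<T}" for z t
    by (rule pss_eq[of a t a1 a2 \<phi> p1, OF A(2)[OF that] A(3)[OF that] P(2)[OF that]]) (use pos[OF that] in blast)
  have pssb: "pss \<phi> b z t = (b2 z t * \<phi> z t - b1 z t * p1 z t) / (\<phi> z t)^3" if "t \<in> {0..<T}" for z t
    by (rule pss_eq[of b t b1 b2 \<phi> p1, OF B(2)[OF that] B(3)[OF that] P(2)[OF that]]) (use pos[OF that] in blast)
  have pssc: "pss \<phi> c z t = (c2 z t * \<phi> z t - c1 z t * p1 z t) / (\<phi> z t)^3" if "t \<in> {0..<T}" for z t
    by (rule pss_eq[of c t c1 c2 \<phi> p1, OF C(2)[OF that] C(3)[OF that] P(2)[OF that]]) (use pos[OF that] in blast)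
  define AT where "AT = (\<lambda>z t. pss \<phi> a z t + ps \<phi> a z t * (ps \<phi> b z t / b z t + ps \<phi> c z t / c z t)
            - 2 * (a z t ^ 4 - (b z t ^ 2 - c z t ^ 2) ^ 2) / (a z t * b z t ^ 2 * c z t ^ 2))"
  define BT where "BT = (\<lambda>z t. pss \<phi> b z t + ps \<phi> b z t * (ps \<phi> a z t / a z t + ps \<phi> c z t / c z t)
            - 2 * (b z t ^ 4 - (a z t ^ 2 - c z t ^ 2) ^ 2) / (a z t ^ 2 * b z t * c z t ^ 2))"
  define CT where "CT = (\<lambda>z t. pss \<phi> c z t + ps \<phi> c z t * (ps \<phi> a z t / a z t + ps \<phi> b z t / b z t)
            - 2 * (c z t ^ 4 - (a z t ^ 2 - b z t ^ 2) ^ 2) / (a z t ^ 2 * b z t ^ 2 * c z t))"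
  have at: "((\<lambda>\<tau>. a z \<tau>) has_real_derivative AT z t) (at t within {0..<T})" if "t \<in> {0..<T}" for z t
    unfolding AT_def using F2[OF that, of z] by blast
  have bt: "((\<lambda>\<tau>. b z \<tau>) has_real_derivative BT z t) (at t within {0..<T})" if "t \<in> {0..<T}" for z t
    unfolding BT_def using F2[OF that, of z] by blast
  have ct: "((\<lambda>\<tau>. c z \<tau>) has_real_derivative CT z t) (at t within {0..<T})" if "t \<in> {0..<T}" for z t
    unfolding CT_def using F2[OF that, of z] by blast
  have ATe: "AT z t = (a2 z t * \<phi> z t - a1 z t * p1 z t) / \<phi> z t ^ 3
        + (a1 z t / \<phi> z t) * ((b1 z t / \<phi> z t) / b z t + (c1 z t / \<phi> z t) / c z t)
        - 2 * (a z t ^ 4 - (b z t ^ 2 - c z t ^ 2) ^ 2) / (a z t * b z t ^ 2 * c z t ^ 2)"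
    if "t \<in> {0..<T}" for z t
    unfolding AT_def using psa[OF that] psb[OF that] psc[OF that] pssa[OF that] by simp
  have BTe: "BT z t = (b2 z t * \<phi> z t - b1 z t * p1 z t) / \<phi> z t ^ 3
        + (b1 z t / \<phi> z t) * ((a1 z t / \<phi> z t) / a z t + (c1 z t / \<phi> z t) / c z t)
        - 2 * (b z t ^ 4 - (a z t ^ 2 - c z t ^ 2) ^ 2) / (a z t ^ 2 * b z t * c z t ^ 2)"
    if "t \<in> {0..<T}" for z t
    unfolding BT_def using psa[OF that] psb[OF that] psc[OF that] pssb[OF that] by simp
  have CTe: "CT z t = (c2 z t * \<phi> z t - c1 z t * p1 z t) / \<phi> z t ^ 3
        + (c1 z t / \<phi> z t) * ((a1 z t / \<phi> z t) / a z t + (b1 z t / \<phi> z t) / b z t)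
        - 2 * (c z t ^ 4 - (a z t ^ 2 - b z t ^ 2) ^ 2) / (c z t * a z t ^ 2 * b z t ^ 2)"
    if "t \<in> {0..<T}" for z t
    unfolding CT_def using psa[OF that] psb[OF that] psc[OF that] pssc[OF that] by (simp add: ac_simps)
  have ab: "a z t \<le> b z t" if "t \<in> {0..<T}" for z t
    by (rule order_preserved[where p = \<phi> and w = c and XT = AT and YT = BT, OF A(1) B(1) _ _ _ A(2) A(3) B(2) B(3)
          at bt ATe BTe _ that]) (use per pos init_order in auto)
  have bc: "b z t \<le> c z t" if "t \<in> {0..<T}" for z t
  proof (rule order_preserved[where p = \<phi> and w = a and XT = BT and YT = CT, OF B(1) C(1) _ _ _ B(2) B(3) C(2) C(3)
          bt ct _ _ _ that])
    show "BT z t = (b2 z t * \<phi> z t - b1 z t * p1 z t) / \<phi> z t ^ 3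
        + (b1 z t / \<phi> z t) * ((c1 z t / \<phi> z t) / c z t + (a1 z t / \<phi> z t) / a z t)
        - 2 * (b z t ^ 4 - (c z t ^ 2 - a z t ^ 2) ^ 2) / (b z t * c z t ^ 2 * a z t ^ 2)"
      if "t \<in> {0..<T}" for z t
      unfolding BTe[OF that] by (simp add: ac_simps power2_commute)
    show "CT z t = (c2 z t * \<phi> z t - c1 z t * p1 z t) / \<phi> z t ^ 3
        + (c1 z t / \<phi> z t) * ((b1 z t / \<phi> z t) / b z t + (a1 z t / \<phi> z t) / a z t)
        - 2 * (c z t ^ 4 - (b z t ^ 2 - a z t ^ 2) ^ 2) / (b z t ^ 2 * c z t * a z t ^ 2)"
      if "t \<in> {0..<T}" for z t
      unfolding CTe[OF that] by (simp add: ac_simps power2_commute)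
  qed (use per pos init_order in auto)
  have T0: "0 \<in> {0..<T}" using t by auto
  have Tp: "0 < T" using t by auto
  define S where "S = (SUP y. c y 0)"
  define C0 where "C0 = S^2"
  obtain \<alpha>c \<beta>c where bc0: "\<alpha>c > 0" "\<And>z t. t \<in> {0..0} \<Longrightarrow> \<alpha>c \<le> c z t \<and> c z t \<le> \<beta>c"
    using compact_bounds[OF C(1), of 0] per pos Tp by (metis order.refl)
  obtain \<alpha>a \<beta>a where ba0: "\<alpha>a > 0" "\<And>z t. t \<in> {0..0} \<Longrightarrow> \<alpha>a \<le> a z t \<and> a z t \<le> \<beta>a"
    using compact_bounds[OF A(1), of 0] per pos Tp by (metis order.refl)
  have bdd1: "bdd_above (range (\<lambda>y. c y 0))"
    using bc0 by (intro bdd_aboveI[where M = \<beta>c]) auto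
  have cS: "c y 0 \<le> S" for y unfolding S_def by (rule cSUP_upper[OF _ bdd1]) simp
  have cinit: "c y 0 ^ 2 \<le> C0" for y
    unfolding C0_def using cS[of y] pos[OF T0, of y] by (intro power_mono) auto
  have bdd2: "bdd_above (range (\<lambda>y. c y 0 / a y 0))"
  proof (intro bdd_aboveI[where M = "\<beta>c / \<alpha>a"])
    fix x assume "x \<in> range (\<lambda>y. c y 0 / a y 0)"
    then obtain y where x: "x = c y 0 / a y 0" by auto
    have "c y 0 \<le> \<beta>c" "\<alpha>a \<le> a y 0" using bc0(2)[of 0 y] ba0(2)[of 0 y] by auto
    moreover have "c y 0 > 0" "a y 0 > 0" using pos[OF T0, of y] by auto
    ultimately show "x \<le> \<beta>c / \<alpha>a" unfolding x using ba0(1) by (intro frac_le) auto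
  qed
  have rinit: "c y 0 / a y 0 \<le> L" for y
    using cSUP_upper[OF _ bdd2, of y] ratio_upper by simp
  have ord: "a z t \<le> c z t \<and> b z t \<le> c z t" if "t \<in> {0..<T}" for z t
    using ab[OF that, of z] bc[OF that, of z] by simp
  have cb: "c z t ^ 2 + 4 * t \<le> C0" if "t \<in> {0..<T}" for z t
    by (rule c_bound[where p = \<phi> and a = a and b = b and CT = CT, OF C(1) _ _ C(2) C(3) ct CTe ord cinit that])
       (use per pos in auto)
  have rb: "(c z t / a z t) * (c z t / a z t) - 1 \<le> (L * L - 1) / (C0 * C0) * ((C0 - 4 * t) * (C0 - 4 * t))"
  proof (rule ratio_bound[where p = \<phi> and b = b and AT = AT and CT = CT, OF A(1) C(1) _ _ _ A(2) A(3) C(2) C(3)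
          at ct CTe _ ord cb rinit t])
    show "AT z t = (a2 z t * \<phi> z t - a1 z t * p1 z t) / \<phi> z t ^ 3
        + (a1 z t / \<phi> z t) * ((c1 z t / \<phi> z t) / c z t + (b1 z t / \<phi> z t) / b z t)
        - 2 * (a z t ^ 4 - (c z t ^ 2 - b z t ^ 2) ^ 2) / (c z t ^ 2 * a z t * b z t ^ 2)"
      if "t \<in> {0..<T}" for z t
      unfolding ATe[OF that] by (simp add: ac_simps power2_commute)
  qed (use per pos in auto)
  have C0p: "C0 > 0" using cinit[of z] pos[OF T0, of z] by (smt (verit) zero_less_power)
  have P0: "a z t > 0" "c z t > 0" using pos[OF t, of z] by auto
  have sq: "(c z t)\<^sup>2 / (a z t)\<^sup>2 = (c z t / a z t) * (c z t / a z t)"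
    by (simp add: power2_eq_square)
  have low: "1 \<le> (c z t / a z t) * (c z t / a z t)"
  proof -
    have r1: "1 \<le> c z t / a z t" using ord[OF t, of z] P0 by simp
    have "1 * 1 \<le> (c z t / a z t) * (c z t / a z t)" by (rule mult_mono[OF r1 r1]) (use r1 in auto)
    thus ?thesis by simp
  qed
  have e1: "(L * L - 1) / (C0 * C0) * ((C0 - 4 * t) * (C0 - 4 * t)) = (L\<^sup>2 - 1) * (1 - 4 * t / C0)\<^sup>2"
    using C0p by (simp add: field_simps power2_eq_square)
  have X: "(L\<^sup>2 - 1) * (1 - 4 * t / C0)\<^sup>2 \<ge> 0"
  proof -
    have "L\<^sup>2 \<ge> 1" using lam by (simp add: one_le_power)
    thus ?thesis by simp
  qed
  have "(L\<^sup>2 - 1) * (1 - 4 * t / C0)\<^sup>2 \<le> exp (L\<^sup>2 - 1) * ((L\<^sup>2 - 1) * (1 - 4 * t / C0)\<^sup>2)"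
  proof -
    have "L\<^sup>2 \<ge> 1" using lam by (simp add: one_le_power)
    hence "exp (L\<^sup>2 - 1) \<ge> 1" by simp
    from mult_right_mono[OF this X] show ?thesis by simp
  qed
  hence up: "(c z t / a z t) * (c z t / a z t) \<le> exp (L\<^sup>2 - 1) * (L\<^sup>2 - 1) * (1 - 4 * t / C0)\<^sup>2 + 1"
    using rb e1 by (simp add: mult.assoc)
  show "1 \<le> (c z t)\<^sup>2 / (a z t)\<^sup>2 \<and> (c z t)\<^sup>2 / (a z t)\<^sup>2 \<le> exp (L\<^sup>2 - 1) * (L\<^sup>2 - 1) * (1 - 4 * t / (SUP y. c y 0)\<^sup>2)\<^sup>2 + 1"
    unfolding sq using low up by (simp add: C0_def S_def)
qed


end
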